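(* For all integers $s\geq 2$ and $t\geq 1$, $$(-1)^t\sigma(s,t)=\sum_{i=0}^{s-2}2^{i}\binom{t+i-1}{i}\sigma(s-i,t+i)+(-1)^t2^s\sum_{j=0}^{t-2}(-1)^j\binom{s+j-1}{j}\lambda(s+j)\lambda(t-j)$$ $$\qquad-2^{s-1}\binom{s+t-2}{s-1}\sum_{p\geq 1}\frac{H_p}{(2p+1)^{s+t-1}}-2^s\binom{s+t-2}{s-1}\lambda(s+t-1)\ln 2,$$ where an empty sum equals $0$.
   Context: $H_p=1+\frac12+\cdots+\frac1p$. For integers $t\geq 1$, $n\geq 1$ let $S_n^{(t)}=\sum_{k=1}^{n}\frac{1}{(2k-1)^t}$, and for integers $s\geq 2$, $t\geq 1$ let $\sigma(s,t)=\sum_{n\geq 1}\frac{S_n^{(t)}}{n^s}$. For real $s>1$, $\lambda(s)=\sum_{n\geq 1}\frac{1}{(2n-1)^s}$. *)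

theory Defs
  imports "HOL-Analysis.Analysis"
begin

definition Hn :: "nat \<Rightarrow> real" where
  "Hn p = (\<Sum>k=1..p. 1 / real k)"

definition S_odd :: "nat \<Rightarrow> nat \<Rightarrow> real" where
  "S_odd t n = (\<Sum>k=1..n. 1 / (2 * real k - 1) ^ t)"

definition sigma :: "nat \<Rightarrow> nat \<Rightarrow> real" where
  "sigma s t = (\<Sum>n. S_odd t (n + 1) / (real (n + 1)) ^ s)"

definition lam :: "real \<Rightarrow> real" where
  "lam s = (\<Sum>n. 1 / (2 * real n + 1) powr s)"

end

theory Submission
  imports Defs
begin

definition G :: "real \<Rightarrow> real \<Rightarrow> real \<Rightarrow> nat \<Rightarrow> nat \<Rightarrow> real" where
  "G x y z s t = (\<Sum>i<s. real ((t+i-1) choose i) / (x^(s-i) * z^(t+i)))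
     + (\<Sum>j<t. real ((s+j-1) choose j) / (y^(t-j) * z^(s+j)))"

lemma G_part:
  fixes x z :: real
  shows "(\<Sum>i<Suc s. real ((t+i) choose i) / (x^(Suc s-i) * z^(Suc t+i)))
       = ((\<Sum>i<s. real ((t+i) choose i) / (x^(s-i) * z^(Suc t+i)))
        + (\<Sum>i<Suc s. real ((t+i-1) choose i) / (x^(Suc s-i) * z^(t+i)))) / z"
proof -
  have L: "(\<Sum>i<Suc s. real ((t+i) choose i) / (x^(Suc s-i) * z^(Suc t+i)))
     = 1 / (x^(Suc s) * z^(Suc t)) + (\<Sum>i<s. real ((t+i) choose i) / (x^(s-i) * z^(Suc (Suc t)+i)))
       + (\<Sum>i<s. real ((t+i) choose (Suc i)) / (x^(s-i) * z^(Suc (Suc t)+i)))"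
    apply (subst sum.lessThan_Suc_shift)
    apply (simp del: sum.lessThan_Suc add: sum.distrib[symmetric] add_divide_distrib[symmetric])
    done
  have R: "(\<Sum>i<Suc s. real ((t+i-1) choose i) / (x^(Suc s-i) * z^(t+i)))
     = 1 / (x^(Suc s) * z^t) + (\<Sum>i<s. real ((t+i) choose (Suc i)) / (x^(s-i) * z^(Suc t+i)))"
    apply (subst sum.lessThan_Suc_shift)
    apply (simp del: sum.lessThan_Suc)
    done
  show ?thesis unfolding L R
    by (simp add: add_divide_distrib sum_divide_distrib power_add mult.assoc mult.commute mult.left_commute)
qed

lemma G_rec: "G x y z (Suc s) (Suc t) = (G x y z s (Suc t) + G x y z (Suc s) t) / z"
proof -
  have A: "(\<Sum>i<Suc s. real ((Suc t+i-1) choose i) / (x^(Suc s-i) * z^(Suc t+i)))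
       = ((\<Sum>i<s. real ((Suc t+i-1) choose i) / (x^(s-i) * z^(Suc t+i)))
        + (\<Sum>i<Suc s. real ((t+i-1) choose i) / (x^(Suc s-i) * z^(t+i)))) / z"
    using G_part[where s=s and t=t and x=x and z=z] by simp
  have B: "(\<Sum>i<Suc t. real ((Suc s+i-1) choose i) / (y^(Suc t-i) * z^(Suc s+i)))
       = ((\<Sum>i<t. real ((Suc s+i-1) choose i) / (y^(t-i) * z^(Suc s+i)))
        + (\<Sum>i<Suc t. real ((s+i-1) choose i) / (y^(Suc t-i) * z^(s+i)))) / z"
    using G_part[where s=t and t=s and x=y and z=z] by simp
  show ?thesis unfolding G_def A B by (simp add: add_divide_distrib)
qed

lemma G_zero_left: "G x y z 0 (Suc t) = 1 / y^(Suc t)"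
  unfolding G_def
  apply (subst sum.lessThan_Suc_shift)
  apply (simp del: sum.lessThan_Suc add: binomial_eq_0)
  done

lemma G_zero_right: "G x y z (Suc s) 0 = 1 / x^(Suc s)"
  unfolding G_def
  apply (subst sum.lessThan_Suc_shift)
  apply (simp del: sum.lessThan_Suc add: binomial_eq_0)
  done

lemma F_rec:
  fixes x y :: real
  assumes "x \<noteq> 0" "y \<noteq> 0" "x + y \<noteq> 0"
  shows "1 / (x^Suc s * y^Suc t) = (1 / (x^s * y^Suc t) + 1 / (x^Suc s * y^t)) / (x+y)"
proof -
  have a: "1 / (x^s * y^Suc t) = x / (x^Suc s * y^Suc t)" using assms by simp
  have b: "1 / (x^Suc s * y^t) = y / (x^Suc s * y^Suc t)" using assms by simp
  show ?thesis unfolding a b add_divide_distrib[symmetric] using assms by simp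
qed

lemma PF:
  fixes x y :: real
  assumes "x \<noteq> 0" "y \<noteq> 0" "x + y \<noteq> 0" "1 \<le> s + t"
  shows "1 / (x^s * y^t) = G x y (x+y) s t"
  using assms(4)
proof (induction s arbitrary: t)
  case 0
  then obtain t' where "t = Suc t'" by (cases t) auto
  then show ?case by (simp add: G_zero_left)
next
  case (Suc s)
  note outer = Suc.IH
  show ?case
  proof (induction t)
    case 0
    then show ?case by (simp add: G_zero_right)
  next
    case (Suc t')
    have IH1: "1 / (x^s * y^(Suc t')) = G x y (x+y) s (Suc t')"
      using outer[of "Suc t'"] by simp
    show ?case
      using F_rec[OF assms(1-3), of s t'] IH1 Suc.IH by (simp add: G_rec)
  qed
qed

lemma term_i:
  fixes N z :: real assumes "N \<noteq> 0" "i \<le> s"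
  shows "2^s * (c / ((2*N)^(s-i) * z^m)) = 2^i * c / (N^(s-i) * z^m)"
proof -
  have "(2::real)^s = 2^i * 2^(s-i)" using assms(2) by (simp add: power_add[symmetric])
  then show ?thesis by (simp add: power_mult_distrib)
qed

lemma term_j:
  fixes r z :: real
  shows "c / ((-r)^k * z^m) = c * (-1)^k / (r^k * z^m)"
proof -
  have p: "(-r)^k = (-1)^k * r^k" by (rule power_minus)
  have q: "1/((-1::real)^k) = (-1)^k" by (cases "even k") auto
  have "c / ((-1)^k * r^k * z^m) = c * (1/((-1::real)^k)) / (r^k * z^m)" by simp
  then show ?thesis unfolding p q by (simp add: mult.assoc)
qed
lemma L1: "(2::real)^(a+2) * (c / ((2*N)^1 * Z)) = 2^(a+1) * c / (N * Z)"
proof -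
  have "(2::real)^(a+2) = 2*2^(a+1)" by simp
  then show ?thesis by simp
qed
lemma L2: fixes r Z :: real shows "2^(a+2) * (c / ((-r)^1 * Z)) = -(2^(a+2) * c / (r * Z))"
  by simp
lemma L3: "((a+b+1) choose b) = ((a+b+1) choose (a+1))"
  using binomial_symmetric[of b "a+b+1"] by (simp add: algebra_simps)
lemma L4: fixes N r z c :: real assumes "N > 0" "r > 0" "z > 0" "z = 2*N - r"
  shows "2^(a+1) * c / (N * z^(k+1)) - 2^(a+2) * c / (r * z^(k+1)) = - (2^(a+1) * c / (N * r * z^k))"
proof -
  have "2^(a+1) * c / (N * z^(k+1)) - 2^(a+2) * c / (r * z^(k+1))
     = (2^(a+1) * c) * (r - 2*N) / (N * r * z^(k+1))"
    using assms by (simp add: field_simps)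
  also have "\<dots> = (2^(a+1) * c) * (-z) / (N * r * (z * z^k))" using assms(4) by simp
  also have "\<dots> = - (2^(a+1) * c / (N * r * z^k))" using assms(3) by simp
  finally show ?thesis .
qed

lemma sum_last1: "(\<Sum>i<(n::nat)+1. f i) = (\<Sum>i<n. f i) + f n" by simp
lemma sum_last2: "(\<Sum>i<(n::nat)+2. f i) = (\<Sum>i<n+1. f i) + f (n+1)" by simp

lemma per_q:
  fixes n q a b :: nat
  assumes "q \<le> n"
  defines "N \<equiv> real n + 1" and "r \<equiv> 2*real(n-q)+1" and "z \<equiv> 2*real q+1"
  shows "(-1)^(b+1) / (N^(a+2) * r^(b+1)) =
     (\<Sum>i<a+1. 2^i * real ((b+i) choose i) / (N^(a+2-i) * z^(b+1+i)))
   + 2^(a+2) * (\<Sum>j<b. real ((a+1+j) choose j) * (-1)^(b+1-j) / (r^(b+1-j) * z^(a+2+j)))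
   - 2^(a+1) * real ((a+b+1) choose (a+1)) / (N * r * z^(a+b+1))"
proof -
  define x where "x = 2*N"
  define y where "y = - r"
  define c where "c = real ((a+b+1) choose (a+1))"
  have Npos: "N > 0" unfolding N_def by simp
  have rpos: "r > 0" unfolding r_def by simp
  have zpos: "z > 0" unfolding z_def by simp
  have xy: "x + y = z" unfolding x_def y_def N_def r_def z_def using assms(1) by (simp add: of_nat_diff)
  have pf: "1 / (x^(a+2) * y^(b+1)) = G x y z (a+2) (b+1)"
    using PF[of x y "a+2" "b+1"] xy Npos rpos zpos unfolding x_def y_def by simp
  have lhs: "2^(a+2) * (1 / (x^(a+2) * y^(b+1))) = (-1)^(b+1) / (N^(a+2) * r^(b+1))"
  proof -
    have p1: "(2*N)^(a+2) = 2^(a+2)*N^(a+2)" by (rule power_mult_distrib)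
    have p2: "(-r)^(b+1) = (-1)^(b+1)*r^(b+1)" by (rule power_minus)
    have p3: "1/((-1::real)^(b+1)) = (-1)^(b+1)" by (cases "even (b+1)") auto
    have "2^(a+2) * (1 / (x^(a+2) * y^(b+1))) = (1/((-1::real)^(b+1))) / (N^(a+2) * r^(b+1))"
      unfolding x_def y_def p1 p2 by simp
    then show ?thesis unfolding p3 .
  qed
  have A: "2^(a+2) * (\<Sum>i<a+1. real ((b+1+i-1) choose i) / (x^(a+2-i) * z^(b+1+i)))
      = (\<Sum>i<a+1. 2^i * real ((b+i) choose i) / (N^(a+2-i) * z^(b+1+i)))"
    unfolding sum_distrib_left x_def
  proof (rule sum.cong)
    fix i assume "i \<in> {..<a+1}"
    then have "i \<le> a+2" by simp
    from term_i[where N=N and c="real ((b+1+i-1) choose i)" and z=z and m="b+1+i", OF _ this] Npos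
    show "2^(a+2) * (real ((b+1+i-1) choose i) / ((2*N)^(a+2-i) * z^(b+1+i)))
        = 2^i * real ((b+i) choose i) / (N^(a+2-i) * z^(b+1+i))" by simp
  qed simp
  have B: "2^(a+2) * (\<Sum>j<b. real ((a+2+j-1) choose j) / (y^(b+1-j) * z^(a+2+j)))
      = 2^(a+2) * (\<Sum>j<b. real ((a+1+j) choose j) * (-1)^(b+1-j) / (r^(b+1-j) * z^(a+2+j)))"
  proof -
    have "(\<Sum>j<b. real ((a+2+j-1) choose j) / (y^(b+1-j) * z^(a+2+j)))
      = (\<Sum>j<b. real ((a+1+j) choose j) * (-1)^(b+1-j) / (r^(b+1-j) * z^(a+2+j)))"
    proof (rule sum.cong)
      fix j assume "j \<in> {..<b}"
      from term_j[where c="real ((a+2+j-1) choose j)" and r=r and k="b+1-j" and z=z and m="a+2+j"]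
      show "real ((a+2+j-1) choose j) / (y^(b+1-j) * z^(a+2+j))
         = real ((a+1+j) choose j) * (-1)^(b+1-j) / (r^(b+1-j) * z^(a+2+j))"
        unfolding y_def by simp
    qed simp
    then show ?thesis by simp
  qed
  have i0: "b+1+(a+1)-1 = a+b+1" "a+2+b-1 = a+b+1" by simp_all
  have i1: "a+2-(a+1) = 1" "b+1+(a+1) = (a+b+1)+1"
           "b+1-b = 1" "a+2+b = (a+b+1)+1" by simp_all
  have lastA: "2^(a+2) * (real ((b+1+(a+1)-1) choose (a+1)) / (x^(a+2-(a+1)) * z^(b+1+(a+1))))
      = 2^(a+1) * c / (N * z^((a+b+1)+1))"
    unfolding i0 unfolding i1 x_def c_def by (rule L1)
  have lastB: "2^(a+2) * (real ((a+2+b-1) choose b) / (y^(b+1-b) * z^(a+2+b)))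
      = -(2^(a+2) * c / (r * z^((a+b+1)+1)))"
    unfolding i0 unfolding i1 y_def c_def L3 by (rule L2)
  have zz: "z = 2*N - r" using xy unfolding x_def y_def by simp
  have comb: "2^(a+1) * c / (N * z^((a+b+1)+1)) - 2^(a+2) * c / (r * z^((a+b+1)+1))
      = - (2^(a+1) * c / (N * r * z^(a+b+1)))"
    by (rule L4[OF Npos rpos zpos zz])
  have Gs: "G x y z (a+2) (b+1) =
      (\<Sum>i<a+1. real ((b+1+i-1) choose i) / (x^(a+2-i) * z^(b+1+i)))
      + real ((b+1+(a+1)-1) choose (a+1)) / (x^(a+2-(a+1)) * z^(b+1+(a+1)))
      + ((\<Sum>j<b. real ((a+2+j-1) choose j) / (y^(b+1-j) * z^(a+2+j)))
      + real ((a+2+b-1) choose b) / (y^(b+1-b) * z^(a+2+b)))"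
    unfolding G_def sum_last1[where n=b] sum_last2[where n=a] ..
  have e1: "(-1)^(b+1) / (N^(a+2) * r^(b+1)) = 2^(a+2) * G x y z (a+2) (b+1)"
    using lhs unfolding pf by (rule sym)
  have e2: "2^(a+2) * G x y z (a+2) (b+1) = 2^(a+2) * (\<Sum>i<a+1. real ((b+1+i-1) choose i) / (x^(a+2-i) * z^(b+1+i)))
      + 2^(a+2) * (real ((b+1+(a+1)-1) choose (a+1)) / (x^(a+2-(a+1)) * z^(b+1+(a+1))))
      + 2^(a+2) * (\<Sum>j<b. real ((a+2+j-1) choose j) / (y^(b+1-j) * z^(a+2+j)))
      + 2^(a+2) * (real ((a+2+b-1) choose b) / (y^(b+1-b) * z^(a+2+b)))"
    unfolding Gs distrib_left by (simp only: add.assoc)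
  show ?thesis using e1 e2 A B lastA lastB comb unfolding c_def by linarith
qed

lemma S_odd_alt: "S_odd t (Suc n) = (\<Sum>q\<le>n. 1/(2*real q+1)^t)"
proof (induction n)
  case 0 then show ?case by (simp add: S_odd_def)
next
  case (Suc n)
  have "S_odd t (Suc (Suc n)) = S_odd t (Suc n) + 1/(2*real (Suc (Suc n)) - 1)^t"
    unfolding S_odd_def by (simp add: sum.cl_ivl_Suc)
  also have "2*real (Suc (Suc n)) - 1 = 2*real (Suc n) + 1" by simp
  finally show ?case using Suc by simp
qed

lemma sum_refl: "(\<Sum>q\<le>n. f (n-q)) = (\<Sum>q\<le>(n::nat). f q)"
  using sum.nat_diff_reindex[where g=f and n="Suc n"] by (simp add: lessThan_Suc_atMost)

lemma sum_div_helper: fixes c N :: real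
  shows "(\<Sum>q\<in>A. c / (N * f q)) = c * ((\<Sum>q\<in>A. 1 / f q) / N)"
  unfolding sum_distrib_left sum_divide_distrib by (rule sum.cong) (simp_all add: mult.commute)

lemma per_n:
  fixes n a b :: nat
  defines "N \<equiv> real n + 1"
  shows "(-1)^(b+1) * (S_odd (b+1) (Suc n) / N^(a+2)) =
     (\<Sum>i<a+1. 2^i * real ((b+i) choose i) * (S_odd (b+1+i) (Suc n) / N^(a+2-i)))
   + 2^(a+2) * (\<Sum>j<b. real ((a+1+j) choose j) * (-1)^(b+1-j)
        * (\<Sum>q\<le>n. 1/(2*real q+1)^(a+2+j) * (1/(2*real(n-q)+1)^(b+1-j))))
   - 2^(a+1) * real ((a+b+1) choose (a+1))
        * (\<Sum>q\<le>n. 1/(N*(2*real(n-q)+1)*(2*real q+1)^(a+b+1)))"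
proof -
  define r where "r = (\<lambda>q. 2*real(n-q)+1)"
  define z where "z = (\<lambda>q. 2*real q+1)"
  define c where "c = real ((a+b+1) choose (a+1))"
  have sq: "(\<Sum>q\<le>n. (-1)^(b+1) / (N^(a+2) * r q^(b+1))) =
     (\<Sum>q\<le>n. (\<Sum>i<a+1. 2^i * real ((b+i) choose i) / (N^(a+2-i) * z q^(b+1+i)))
   + 2^(a+2) * (\<Sum>j<b. real ((a+1+j) choose j) * (-1)^(b+1-j) / (r q^(b+1-j) * z q^(a+2+j)))
   - 2^(a+1) * c / (N * r q * z q^(a+b+1)))"
    apply (rule sum.cong[OF refl])
    unfolding N_def r_def z_def c_def
    apply (rule per_q)
    apply simp
    done
  have L: "(\<Sum>q\<le>n. (-1)^(b+1) / (N^(a+2) * r q^(b+1))) = (-1)^(b+1) * (S_odd (b+1) (Suc n) / N^(a+2))"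
  proof -
    have "(\<Sum>q\<le>n. 1 / r q^(b+1)) = (\<Sum>q\<le>n. 1/(2*real q+1)^(b+1))"
      unfolding r_def by (rule sum_refl)
    then show ?thesis unfolding sum_div_helper S_odd_alt by simp
  qed
  have X: "(\<Sum>q\<le>n. (\<Sum>i<a+1. 2^i * real ((b+i) choose i) / (N^(a+2-i) * z q^(b+1+i))))
      = (\<Sum>i<a+1. 2^i * real ((b+i) choose i) * (S_odd (b+1+i) (Suc n) / N^(a+2-i)))"
    apply (subst sum.swap)
    apply (rule sum.cong[OF refl])
    apply (simp only: sum_div_helper S_odd_alt z_def)
    done
  have Y: "(\<Sum>q\<le>n. 2^(a+2) * (\<Sum>j<b. real ((a+1+j) choose j) * (-1)^(b+1-j) / (r q^(b+1-j) * z q^(a+2+j))))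
     = 2^(a+2) * (\<Sum>j<b. real ((a+1+j) choose j) * (-1)^(b+1-j)
        * (\<Sum>q\<le>n. 1/(2*real q+1)^(a+2+j) * (1/(2*real(n-q)+1)^(b+1-j))))"
    unfolding sum_distrib_left[symmetric]
    apply (subst sum.swap)
    apply (rule arg_cong[where f="\<lambda>u. 2^(a+2) * u"])
    apply (rule sum.cong[OF refl])
    apply (simp add: sum_distrib_left r_def z_def mult.commute)
    done
  have Z: "(\<Sum>q\<le>n. 2^(a+1) * c / (N * r q * z q^(a+b+1)))
     = 2^(a+1) * c * (\<Sum>q\<le>n. 1/(N*(2*real(n-q)+1)*(2*real q+1)^(a+b+1)))"
    by (simp add: sum_distrib_left r_def z_def)
  show ?thesis
    using sq L X Y Z unfolding sum.distrib sum_subtractf c_def by linarith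
qed

lemma sqrt_step: fixes n :: nat
  shows "2 * sqrt (real n + 1) + 1/sqrt (real n + 2) \<le> 2 * sqrt (real n + 2)"
proof -
  define u where "u = sqrt (real n + 1)"
  define v where "v = sqrt (real n + 2)"
  have u0: "u > 0" and v0: "v > 0" unfolding u_def v_def by simp_all
  have uu: "u * u = real n + 1" unfolding u_def by (simp flip: power2_eq_square)
  have vv: "v * v = real n + 2" unfolding v_def by (simp flip: power2_eq_square)
  have "u * v = sqrt ((real n + 1)*(real n + 2))" unfolding u_def v_def by (simp add: real_sqrt_mult)
  also have "\<dots> \<le> sqrt ((real n + 3/2)^2)"
    by (rule real_sqrt_le_mono) (simp add: power2_eq_square algebra_simps)
  also have "\<dots> = real n + 3/2" by simp
  finally have uv: "u * v \<le> real n + 3/2" .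
  have "1 \<le> 2 * v * v - 2 * u * v" using uv vv by linarith
  then have "1/v \<le> (2 * v * v - 2 * u * v)/v" using v0 by (simp add: divide_right_mono)
  also have "\<dots> = 2 * v - 2 * u" using v0 by (simp add: field_simps)
  finally show ?thesis unfolding u_def v_def by simp
qed

lemma sqrt_sum_bound:
  fixes f :: "nat \<Rightarrow> real"
  assumes "\<And>k. f k \<le> 1/sqrt (real k + 1)"
  shows "(\<Sum>k\<le>n. f k) \<le> 2 * sqrt (real n + 1)"
proof (induction n)
  case 0 then show ?case using assms[of 0] by simp
next
  case (Suc n)
  have "(\<Sum>k\<le>Suc n. f k) \<le> 2 * sqrt (real n + 1) + 1/sqrt (real n + 2)"
    using Suc assms[of "Suc n"] by (simp add: add.commute)
  also have "\<dots> \<le> 2 * sqrt (real (Suc n) + 1)" using sqrt_step[of n] by (simp add: add.commute)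
  finally show ?case .
qed

lemma inv_le_sqrt: fixes x :: real assumes "x \<ge> 1" shows "1/x \<le> 1/sqrt x"
proof -
  have "sqrt x \<le> sqrt (x^2)" using assms by (intro real_sqrt_le_mono) (simp add: power2_eq_square)
  then have "sqrt x \<le> x" using assms by simp
  moreover have "sqrt x > 0" using assms by simp
  ultimately show ?thesis using assms by (intro divide_left_mono) auto
qed

lemma S_odd_bound: assumes "t \<ge> 1" shows "S_odd t (Suc n) \<le> 2 * sqrt (real n + 1)"
proof -
  have "S_odd t (Suc n) = (\<Sum>q\<le>n. 1/(2*real q+1)^t)"
    by (rule S_odd_alt)
  also have "\<dots> \<le> 2 * sqrt (real n + 1)"
  proof (rule sqrt_sum_bound)
    fix k
    have "1/(2*real k+1)^t \<le> 1/(2*real k+1)"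
      using assms by (intro divide_left_mono) (auto intro: self_le_power)
    also have "\<dots> \<le> 1/(real k + 1)" by (intro divide_left_mono) auto
    also have "\<dots> \<le> 1/sqrt (real k + 1)" by (rule inv_le_sqrt) simp
    finally show "1/(2*real k+1)^t \<le> 1/sqrt (real k + 1)" .
  qed
  finally show ?thesis .
qed

lemma Hn_alt: "Hn q = (\<Sum>k<q. 1/(real k + 1))"
  by (induction q) (simp_all add: Hn_def add.commute)

lemma Hn_bound: "Hn q \<le> 2 * sqrt (real q + 1)"
proof -
  have "Hn q \<le> (\<Sum>k\<le>q. 1/(real k + 1))"
    unfolding Hn_alt by (rule sum_mono2) auto
  also have "\<dots> \<le> 2 * sqrt (real q + 1)"
    by (rule sqrt_sum_bound) (rule inv_le_sqrt, simp)
  finally show ?thesis .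
qed

lemma summable_powr32: "summable (\<lambda>n. (real n + 1) powr (-3/2))"
proof -
  have "summable (\<lambda>n. real n powr (-3/2))" by (subst summable_real_powr_iff) simp
  then have "summable (\<lambda>n. real (Suc n) powr (-3/2))" by (subst summable_Suc_iff)
  then show ?thesis by (simp add: add.commute)
qed

lemma sqrt_over_pow: fixes x :: real assumes "x \<ge> 1" "s \<ge> 2"
  shows "2 * sqrt x / x^s \<le> 2 * x powr (-3/2)"
proof -
  have "x^s \<ge> x^2" using assms by (intro power_increasing) auto
  then have "2 * sqrt x / x^s \<le> 2 * sqrt x / x^2" using assms
    by (intro divide_left_mono) auto
  also have "\<dots> = 2 * x powr (-3/2)"
  proof -
    have "sqrt x = x powr (1/2)" using assms by (simp add: powr_half_sqrt)
    moreover have "x powr 2 = x^2" using assms by (intro powr_numeral) simp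
    moreover have "x powr (1/2 - 2) = x powr (1/2) / x powr 2" by (rule powr_diff)
    ultimately have "sqrt x / x^2 = x powr (-3/2)" by simp
    then show ?thesis by simp
  qed
  finally show ?thesis .
qed

lemma summable_a: assumes "s \<ge> 2" "t \<ge> 1"
  shows "summable (\<lambda>n. S_odd t (Suc n) / (real n + 1)^s)"
proof (rule summable_comparison_test'[where N=0])
  show "summable (\<lambda>n. 2 * (real n + 1) powr (-3/2))"
    using summable_powr32 by (rule summable_mult)
  fix n :: nat
  have nn: "S_odd t (Suc n) \<ge> 0" unfolding S_odd_def by (intro sum_nonneg) auto
  have "S_odd t (Suc n) / (real n + 1)^s \<le> 2 * sqrt (real n + 1) / (real n + 1)^s"
    using S_odd_bound[OF assms(2)] by (intro divide_right_mono) auto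
  also have "\<dots> \<le> 2 * (real n + 1) powr (-3/2)" by (rule sqrt_over_pow) (use assms in auto)
  finally show "norm (S_odd t (Suc n) / (real n + 1)^s) \<le> 2 * (real n + 1) powr (-3/2)"
    using nn by simp
qed

lemma summable_odd: assumes "k \<ge> 2" shows "summable (\<lambda>n. 1/(2*real n+1)^k)"
proof (rule summable_comparison_test'[where N=1])
  show "summable (\<lambda>n. inverse (real n ^ k))" by (rule inverse_power_summable[OF assms])
  fix n :: nat assume "n \<ge> 1"
  then have "real n ^ k \<le> (2*real n+1)^k" by (intro power_mono) auto
  then show "norm (1/(2*real n+1)^k) \<le> inverse (real n ^ k)"
  proof -
    have "1/(2*real n+1)^k \<le> 1/(real n ^ k)"
      using \<open>real n ^ k \<le> (2*real n+1)^k\<close> \<open>n\<ge>1\<close> by (intro divide_left_mono) auto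
    then show ?thesis by (simp add: inverse_eq_divide)
  qed
qed

lemma lam_alt: "lam (real k) = (\<Sum>n. 1/(2*real n+1)^k)"
  unfolding lam_def by (simp add: powr_realpow)

lemma sums_ln2: "(\<lambda>p. 2/(2*real p+1) - 1/(real p+1)) sums (2 * ln 2)"
proof -
  have "(\<lambda>k. 2 * (inverse (real (2*k+1)) - inverse (real (2*k+2)))) sums (2 * ln 2)"
    by (rule sums_mult[OF alternating_harmonic_series_sums'])
  moreover have "\<And>k. 2 * (inverse (real (2*k+1)) - inverse (real (2*k+2))) = 2/(2*real k+1) - 1/(real k+1)"
  proof -
    fix k :: nat
    have "real (2*k+2) = 2*(real k+1)" by simp
    moreover have "(2::real)/(2*(real k+1)) = 1/(real k+1)" by (simp add: field_simps)
    moreover have "real (2*k+1) = 2*real k+1" by simp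
    ultimately show "2 * (inverse (real (2*k+1)) - inverse (real (2*k+2))) = 2/(2*real k+1) - 1/(real k+1)"
      by (simp only: inverse_eq_divide right_diff_distrib times_divide_eq_right mult_1_right)
  qed
  ultimately show ?thesis by simp
qed

lemma sums_H: "(\<lambda>p. 1/(real p+1) - 1/(real p + real q + 1)) sums (Hn q)"
proof (induction q)
  case 0 then show ?case by (simp add: Hn_def)
next
  case (Suc q)
  have t: "(\<lambda>p. 1/(real p + real q + 1) - 1/(real (Suc p) + real q + 1)) sums (1/(real 0 + real q + 1) - 0)"
  proof (rule telescope_sums')
    show "(\<lambda>p. 1/(real p + real q + 1)) \<longlonglongrightarrow> 0"
      by real_asymp
  qed
  have "(\<lambda>p. (1/(real p+1) - 1/(real p + real q + 1)) + (1/(real p + real q + 1) - 1/(real (Suc p) + real q + 1)))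
     sums (Hn q + (1/(real 0 + real q + 1) - 0))"
    by (rule sums_add[OF Suc t])
  moreover have "Hn (Suc q) = Hn q + 1/(real q + 1)" by (simp add: Hn_def add.commute)
  ultimately show ?case by (simp add: add.commute add.left_commute)
qed

lemma sect_sums:
  assumes "w \<ge> 1"
  shows "(\<lambda>p. 1/((real (p+q)+1)*(2*real p+1)*(2*real q+1)^w))
           sums ((2*ln 2 + Hn q) / (2*real q+1)^(w+1))"
proof -
  have s: "(\<lambda>p. (2/(2*real p+1) - 1/(real p+1)) + (1/(real p+1) - 1/(real p + real q + 1)))
     sums (2*ln 2 + Hn q)"
    by (rule sums_add[OF sums_ln2 sums_H])
  have s2: "(\<lambda>p. (1/(2*real q+1)^(w+1)) * ((2/(2*real p+1) - 1/(real p+1)) + (1/(real p+1) - 1/(real p + real q + 1))))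
     sums ((1/(2*real q+1)^(w+1)) * (2*ln 2 + Hn q))"
    by (rule sums_mult[OF s])
  have eq: "(1/(2*real q+1)^(w+1)) * ((2/(2*real p+1) - 1/(real p+1)) + (1/(real p+1) - 1/(real p + real q + 1)))
      = 1/((real (p+q)+1)*(2*real p+1)*(2*real q+1)^w)" for p
  proof -
    have a: "(2/(2*real p+1) - 1/(real p+1)) + (1/(real p+1) - 1/(real p + real q + 1))
        = (2*real q+1) / ((2*real p+1)*(real p + real q + 1))"
    proof -
      have p1: "2*real p+1 > 0" "real p + real q + 1 > 0" by simp_all
      have "2/(2*real p+1) - 1/(real p + real q + 1) = (2*(real p + real q + 1) - (2*real p+1)) / ((2*real p+1)*(real p + real q + 1))"
        using p1 by (simp add: diff_frac_eq)
      also have "2*(real p + real q + 1) - (2*real p+1) = 2*real q+1" by simp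
      finally show ?thesis by simp
    qed
    have pos: "2*real q+1 > 0" "2*real p+1 > 0" "real p + real q + 1 > 0" "(2*real q+1)^w > 0" by simp_all
    have "(1/(2*real q+1)^(w+1)) * ((2*real q+1) / ((2*real p+1)*(real p + real q + 1)))
       = 1/((real p + real q + 1)*(2*real p+1)*(2*real q+1)^w)"
    proof -
      have aux: "\<And>Z Y P Q :: real. Z \<noteq> 0 \<Longrightarrow> (1/(Z*Y)) * (Z/(P*Q)) = 1/(Q*P*Y)"
        by (simp add: mult.commute mult.left_commute)
      have "(2*real q+1)^(w+1) = (2*real q+1)*(2*real q+1)^w" by simp
      then show ?thesis using aux[of "2*real q+1" "(2*real q+1)^w"] pos by simp
    qed
    then show ?thesis unfolding a by (simp add: add.commute add.left_commute)
  qed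
  show ?thesis using s2 unfolding eq by simp
qed

lemma G_bound:
  assumes "w \<ge> 1"
  shows "(2*ln 2 + Hn q) / (2*real q+1)^(w+1) \<le> 2 * (2 * (real q + 1) powr (-3/2))"
proof -
  have l2: "ln (2::real) < 1" by (rule ln_2_less_1)
  have "2*ln 2 + Hn q \<le> 2 * (2 * sqrt (real q + 1))"
  proof -
    have "1 \<le> sqrt (real q + 1)" by simp
    then show ?thesis using Hn_bound[of q] l2 by linarith
  qed
  moreover have "(real q + 1)^(w+1) \<le> (2*real q+1)^(w+1)" by (intro power_mono) auto
  moreover have "0 \<le> 2*ln 2 + Hn q"
  proof -
    have "Hn q \<ge> 0" unfolding Hn_def by (intro sum_nonneg) auto
    then show ?thesis by simp
  qed
  ultimately have "(2*ln 2 + Hn q) / (2*real q+1)^(w+1) \<le> (2 * (2 * sqrt (real q + 1))) / (real q + 1)^(w+1)"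
    by (intro frac_le) auto
  also have "\<dots> = 2 * (2 * sqrt (real q + 1) / (real q + 1)^(w+1))" by simp
  also have "\<dots> \<le> 2 * (2 * (real q + 1) powr (-3/2))"
    using sqrt_over_pow[of "real q + 1" "w+1"] assms by simp
  finally show ?thesis .
qed

lemma G_summable:
  assumes "w \<ge> 1"
  shows "summable (\<lambda>q. (2*ln 2 + Hn q) / (2*real q+1)^(w+1))"
proof (rule summable_comparison_test'[where N=0])
  show "summable (\<lambda>q. 2 * (2 * (real q + 1) powr (-3/2)))"
    by (intro summable_mult summable_powr32)
  fix q :: nat
  have "Hn q \<ge> 0" unfolding Hn_def by (intro sum_nonneg) auto
  then have "0 \<le> (2*ln 2 + Hn q) / (2*real q+1)^(w+1)" by simp
  then have "norm ((2*ln 2 + Hn q) / (2*real q+1)^(w+1)) = (2*ln 2 + Hn q) / (2*real q+1)^(w+1)"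
    by (simp only: real_norm_def abs_of_nonneg)
  then show "norm ((2*ln 2 + Hn q) / (2*real q+1)^(w+1)) \<le> 2 * (2 * (real q + 1) powr (-3/2))"
    using G_bound[OF assms, of q] by simp
qed

lemma Hn_nonneg: "Hn q \<ge> 0" unfolding Hn_def by (intro sum_nonneg) auto

lemma D_sums:
  assumes "w \<ge> 1"
  shows "(\<lambda>n. \<Sum>q\<le>n. 1/((real n+1)*(2*real(n-q)+1)*(2*real q+1)^w))
           sums (\<Sum>q. (2*ln 2 + Hn q)/(2*real q+1)^(w+1))"
proof -
  define f where "f = (\<lambda>(q,p). 1/((real (p+q)+1)*(2*real p+1)*(2*real q+1)^w :: real))"
  define Gq where "Gq = (\<lambda>q::nat. (2*ln 2 + Hn q)/(2*real q+1)^(w+1))"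
  define g where "g = (\<lambda>(n,q). 1/((real n+1)*(2*real(n-q)+1)*(2*real q+1)^w :: real))"
  have Gnn: "Gq q \<ge> 0" for q unfolding Gq_def using Hn_nonneg[of q] by simp
  have sec: "((\<lambda>p. f (q,p)) has_sum Gq q) UNIV" if "q \<in> UNIV" for q
    unfolding f_def Gq_def prod.case
    by (rule sums_nonneg_imp_has_sum[OF sect_sums[OF assms]]) simp
  have Gs: "(Gq has_sum (\<Sum>q. Gq q)) UNIV"
    by (rule sums_nonneg_imp_has_sum[OF summable_sums[OF G_summable[OF assms, folded Gq_def]] Gnn])
  have fsum: "f summable_on Sigma UNIV (\<lambda>_. UNIV)"
    by (rule summable_on_SigmaI[OF sec has_sum_imp_summable[OF Gs]]) (auto simp: f_def)
  have fhs: "(f has_sum (\<Sum>q. Gq q)) (Sigma UNIV (\<lambda>_. UNIV))"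
    by (rule has_sum_SigmaI[OF sec Gs fsum])
  have ghs: "(g has_sum (\<Sum>q. Gq q)) (Sigma UNIV (\<lambda>n. {..n}))"
  proof -
    have "(g has_sum (\<Sum>q. Gq q)) (Sigma UNIV (\<lambda>n. {..n})) = (f has_sum (\<Sum>q. Gq q)) (Sigma UNIV (\<lambda>_. UNIV))"
      by (rule has_sum_reindex_bij_witness[where j="\<lambda>(n,q). (q, n-q)" and i="\<lambda>(q,p). (p+q, q)"])
         (auto simp: f_def g_def)
    then show ?thesis using fhs by simp
  qed
  have "((\<lambda>n. \<Sum>q\<le>n. g (n,q)) has_sum (\<Sum>q. Gq q)) UNIV"
    by (rule has_sum_Sigma'[OF ghs]) simp
  then show ?thesis unfolding g_def Gq_def by (auto dest: has_sum_imp_sums)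
qed

lemma D_value:
  assumes "w \<ge> 1"
  shows "(\<Sum>q. (2*ln 2 + Hn q)/(2*real q+1)^(w+1))
       = (\<Sum>p. Hn (p+1)/(2*real (p+1)+1)^(w+1)) + 2*ln 2 * lam (real (w+1))"
proof -
  define Gq where "Gq = (\<lambda>q::nat. (2*ln 2 + Hn q)/(2*real q+1)^(w+1))"
  define h where "h = (\<lambda>q::nat. Hn q/(2*real q+1)^(w+1))"
  have s0: "Gq sums (\<Sum>q. Gq q)"
    unfolding Gq_def by (rule summable_sums[OF G_summable[OF assms]])
  have s1: "(\<lambda>q. 2*ln 2 * (1/(2*real q+1)^(w+1))) sums (2*ln 2 * lam (real (w+1)))"
    unfolding lam_alt using assms by (intro sums_mult summable_sums summable_odd) simp
  have "(\<lambda>q. Gq q - 2*ln 2 * (1/(2*real q+1)^(w+1))) sums ((\<Sum>q. Gq q) - 2*ln 2 * lam (real (w+1)))"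
    by (rule sums_diff[OF s0 s1])
  moreover have "\<And>q. Gq q - 2*ln 2 * (1/(2*real q+1)^(w+1)) = h q"
    unfolding Gq_def h_def by (simp add: add_divide_distrib)
  ultimately have "h sums ((\<Sum>q. Gq q) - 2*ln 2 * lam (real (w+1)))" by simp
  moreover have "h 0 = 0" unfolding h_def by (simp add: Hn_def)
  ultimately have "(\<lambda>p. h (Suc p)) sums ((\<Sum>q. Gq q) - 2*ln 2 * lam (real (w+1)))"
    by (simp add: sums_Suc_iff)
  then have "(\<Sum>p. h (Suc p)) = (\<Sum>q. Gq q) - 2*ln 2 * lam (real (w+1))"
    by (rule sums_unique[symmetric])
  then show ?thesis unfolding h_def Gq_def by simp
qed

lemma B_sums:
  assumes "p \<ge> 2" "m \<ge> 2"
  shows "(\<lambda>n. \<Sum>q\<le>n. 1/(2*real q+1)^p * (1/(2*real(n-q)+1)^m)) sums (lam (real p) * lam (real m))"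
proof -
  have a: "summable (\<lambda>k. norm (1/(2*real k+1)^p))" using summable_odd[OF assms(1)] by simp
  have b: "summable (\<lambda>k. norm (1/(2*real k+1)^m))" using summable_odd[OF assms(2)] by simp
  show ?thesis using Cauchy_product_sums[OF a b] unfolding lam_alt .
qed

lemma sigma_alt: "sigma s t = (\<Sum>n. S_odd t (Suc n) / (real n + 1)^s)"
  unfolding sigma_def by (simp add: add.commute)

lemma sign_lemma: assumes "j \<le> b+1" shows "(-1::real)^(b+1-j) = (-1)^(b+1) * (-1)^j"
proof -
  have "b+1+j = (b+1-j) + 2*j" using assms by simp
  then have "(-1::real)^(b+1+j) = (-1)^(b+1-j) * ((-1)^2)^j" by (simp only: power_add power_mult)
  then show ?thesis by (simp add: power_add)
qed

lemma main_ab: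
  fixes a b :: nat
  shows "(-1) ^ (b+1) * sigma (a+2) (b+1) =
      (\<Sum>i=0..(a+2)-2. 2 ^ i * real (((b+1) + i - 1) choose i) * sigma ((a+2) - i) ((b+1) + i))
    + (-1) ^ (b+1) * 2 ^ (a+2) * (\<Sum>j\<in>{0..<(b+1)-1}. (-1) ^ j * real (((a+2) + j - 1) choose j)
          * lam (real ((a+2) + j)) * lam (real ((b+1) - j)))
    - 2 ^ ((a+2) - 1) * real (((a+2) + (b+1) - 2) choose ((a+2) - 1))
          * (\<Sum>p. Hn (p + 1) / (2 * real (p + 1) + 1) ^ ((a+2) + (b+1) - 1))
    - 2 ^ (a+2) * real (((a+2) + (b+1) - 2) choose ((a+2) - 1)) * lam (real ((a+2) + (b+1) - 1)) * ln 2"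
proof -
  define c where "c = real ((a+b+1) choose (a+1))"
  define Hs where "Hs = (\<Sum>p. Hn (p+1)/(2*real (p+1)+1)^(a+b+1+1))"
  define LHS where "LHS = (\<lambda>n. (-1)^(b+1) * (S_odd (b+1) (Suc n) / (real n + 1)^(a+2)))"
  define An where "An = (\<lambda>n. (\<Sum>i<a+1. 2^i * real ((b+i) choose i) * (S_odd (b+1+i) (Suc n) / (real n + 1)^(a+2-i))))"
  define Bn where "Bn = (\<lambda>n. 2^(a+2) * (\<Sum>j<b. real ((a+1+j) choose j) * (-1)^(b+1-j)
        * (\<Sum>q\<le>n. 1/(2*real q+1)^(a+2+j) * (1/(2*real(n-q)+1)^(b+1-j)))))"
  define Dn where "Dn = (\<lambda>n. 2^(a+1) * c * (\<Sum>q\<le>n. 1/((real n + 1)*(2*real(n-q)+1)*(2*real q+1)^(a+b+1))))"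
  have pn: "LHS n = An n + Bn n - Dn n" for n
    unfolding LHS_def An_def Bn_def Dn_def c_def by (rule per_n)
  have sL: "LHS sums ((-1)^(b+1) * sigma (a+2) (b+1))"
    unfolding LHS_def sigma_alt by (intro sums_mult summable_sums summable_a) auto
  have sA: "An sums (\<Sum>i<a+1. 2^i * real ((b+i) choose i) * sigma (a+2-i) (b+1+i))"
    unfolding An_def sigma_alt by (intro sums_sum sums_mult summable_sums summable_a) auto
  have sB: "Bn sums (2^(a+2) * (\<Sum>j<b. real ((a+1+j) choose j) * (-1)^(b+1-j)
        * (lam (real (a+2+j)) * lam (real (b+1-j)))))"
    unfolding Bn_def by (intro sums_sum sums_mult B_sums) auto
  have sD: "Dn sums (2^(a+1) * c * (Hs + 2*ln 2 * lam (real (a+b+1+1))))"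
  proof -
    have d1: "(\<lambda>n. \<Sum>q\<le>n. 1/((real n+1)*(2*real(n-q)+1)*(2*real q+1)^(a+b+1)))
           sums (\<Sum>q. (2*ln 2 + Hn q)/(2*real q+1)^(a+b+1+1))"
      by (rule D_sums) simp
    have w1: "1 \<le> a+b+1" by simp
    have d2: "(\<lambda>n. \<Sum>q\<le>n. 1/((real n+1)*(2*real(n-q)+1)*(2*real q+1)^(a+b+1)))
           sums (Hs + 2*ln 2 * lam (real (a+b+1+1)))"
      using d1 unfolding D_value[OF w1] Hs_def .
    show ?thesis unfolding Dn_def by (rule sums_mult[OF d2])
  qed
  have "LHS sums ((\<Sum>i<a+1. 2^i * real ((b+i) choose i) * sigma (a+2-i) (b+1+i))
     + 2^(a+2) * (\<Sum>j<b. real ((a+1+j) choose j) * (-1)^(b+1-j) * (lam (real (a+2+j)) * lam (real (b+1-j))))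
     - 2^(a+1) * c * (Hs + 2*ln 2 * lam (real (a+b+1+1))))"
    unfolding pn by (intro sums_diff sums_add sA sB sD)
  then have eqn: "(-1)^(b+1) * sigma (a+2) (b+1) = (\<Sum>i<a+1. 2^i * real ((b+i) choose i) * sigma (a+2-i) (b+1+i))
     + 2^(a+2) * (\<Sum>j<b. real ((a+1+j) choose j) * (-1)^(b+1-j) * (lam (real (a+2+j)) * lam (real (b+1-j))))
     - 2^(a+1) * c * (Hs + 2*ln 2 * lam (real (a+b+1+1)))"
    using sL sums_unique2 by blast
  have P1: "(\<Sum>i=0..(a+2)-2. 2 ^ i * real (((b+1) + i - 1) choose i) * sigma ((a+2) - i) ((b+1) + i))
      = (\<Sum>i<a+1. 2^i * real ((b+i) choose i) * sigma (a+2-i) (b+1+i))"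
    by (simp add: atLeast0AtMost lessThan_Suc_atMost)
  have P2: "(-1) ^ (b+1) * 2 ^ (a+2) * (\<Sum>j\<in>{0..<(b+1)-1}. (-1) ^ j * real (((a+2) + j - 1) choose j)
          * lam (real ((a+2) + j)) * lam (real ((b+1) - j)))
      = 2^(a+2) * (\<Sum>j<b. real ((a+1+j) choose j) * (-1)^(b+1-j) * (lam (real (a+2+j)) * lam (real (b+1-j))))"
  proof -
    have inner: "(-1) ^ (b+1) * (\<Sum>j\<in>{0..<(b+1)-1}. (-1) ^ j * real (((a+2) + j - 1) choose j)
          * lam (real ((a+2) + j)) * lam (real ((b+1) - j)))
       = (\<Sum>j<b. real ((a+1+j) choose j) * (-1)^(b+1-j) * (lam (real (a+2+j)) * lam (real (b+1-j))))"
      unfolding sum_distrib_left atLeast0LessThan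
    proof (rule sum.cong)
      fix j assume "j \<in> {..<b}"
      then have "j \<le> b+1" by simp
      note sg = sign_lemma[OF this]
      show "(-1) ^ (b+1) * ((-1) ^ j * real (((a+2) + j - 1) choose j)
          * lam (real ((a+2) + j)) * lam (real ((b+1) - j)))
          = real ((a+1+j) choose j) * (-1)^(b+1-j) * (lam (real (a+2+j)) * lam (real (b+1-j)))"
        unfolding sg by (simp add: mult_ac)
    qed simp
    then have "2^(a+2) * ((-1) ^ (b+1) * (\<Sum>j\<in>{0..<(b+1)-1}. (-1) ^ j * real (((a+2) + j - 1) choose j)
          * lam (real ((a+2) + j)) * lam (real ((b+1) - j))))
       = 2^(a+2) * (\<Sum>j<b. real ((a+1+j) choose j) * (-1)^(b+1-j) * (lam (real (a+2+j)) * lam (real (b+1-j))))"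
      by (rule arg_cong)
    then show ?thesis by (simp only: mult_ac)
  qed
  have P3: "2 ^ ((a+2) - 1) * real (((a+2) + (b+1) - 2) choose ((a+2) - 1))
          * (\<Sum>p. Hn (p + 1) / (2 * real (p + 1) + 1) ^ ((a+2) + (b+1) - 1))
      = 2^(a+1) * c * Hs"
  proof -
    have "(a+2) + (b+1) - 1 = a+b+1+1" "(a+2) + (b+1) - 2 = a+b+1" "(a+2) - 1 = a+1" by simp_all
    then show ?thesis unfolding Hs_def c_def by simp
  qed
  have P4: "2 ^ (a+2) * real (((a+2) + (b+1) - 2) choose ((a+2) - 1)) * lam (real ((a+2) + (b+1) - 1)) * ln 2
      = 2^(a+1) * c * (2*ln 2 * lam (real (a+b+1+1)))"
  proof -
    have "(a+2) + (b+1) - 1 = a+b+1+1" "(a+2) + (b+1) - 2 = a+b+1" "(a+2) - 1 = a+1" by simp_all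
    moreover have "(2::real)^(a+2) = 2 * 2^(a+1)" by simp
    ultimately show ?thesis unfolding c_def by (simp add: mult_ac)
  qed
  have P5: "2^(a+1) * c * (Hs + 2*ln 2 * lam (real (a+b+1+1))) = 2^(a+1) * c * Hs + 2^(a+1) * c * (2*ln 2 * lam (real (a+b+1+1)))"
    by (simp only: distrib_left)
  show ?thesis using eqn P1 P2 P3 P4 P5 by linarith
qed

theorem mainTheorem10:
  fixes s t :: nat
  assumes "s \<ge> 2" and "t \<ge> 1"
  shows "(-1) ^ t * sigma s t =
      (\<Sum>i=0..s-2. 2 ^ i * real ((t + i - 1) choose i) * sigma (s - i) (t + i))
    + (-1) ^ t * 2 ^ s * (\<Sum>j\<in>{0..<t-1}. (-1) ^ j * real ((s + j - 1) choose j)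
          * lam (real (s + j)) * lam (real (t - j)))
    - 2 ^ (s - 1) * real ((s + t - 2) choose (s - 1))
          * (\<Sum>p. Hn (p + 1) / (2 * real (p + 1) + 1) ^ (s + t - 1))
    - 2 ^ s * real ((s + t - 2) choose (s - 1)) * lam (real (s + t - 1)) * ln 2"
proof -
  obtain a where sa: "s = a + 2" using assms(1) by (metis le_add_diff_inverse2)
  obtain b where tb: "t = b + 1" using assms(2) by (metis le_add_diff_inverse2)
  show ?thesis unfolding sa tb by (rule main_ab)
qed

end
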